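(* Let $G$ be an affine partial cube with set of antipodes $A(G)$, and let $E_e$ be a $\Theta$-class of $G$. Then $A(\pi_e(G))=\pi_e(A(G))$.
   Context: Hypercube $Q_n$: vertex set $\{+,-\}^n$, adjacency = differing in one coordinate. A partial cube is an isometric subgraph of $Q_n$ with $n$ minimal; its edges split into $\Theta$-classes $E_f$ (edges flipping coordinate $f$), with halfspaces $E_f^{\pm}$ (vertices whose coordinate $f$ is $\pm$). A partial cube is antipodal if with each vertex it contains the vertex with all coordinates flipped. An affine partial cube is a halfspace of an antipodal partial cube. The contraction $\pi_e(G)$ is the graph obtained by contracting all edges of $E_e$ (a vertex is mapped to its sign vector with coordinate $e$ deleted); contractions of affine partial cubes are affine. For a partial cube $G$ and vertices $u,w$, the interval $[u,w]$ is the set of vertices on shortest $u$–$w$ paths. The antipodes $A(G)$ of an affine partial cube $G$ are the vertices $u\in G$ for which there is a vertex $-u\in G$ with $[u,-u]=V(G)$ (equivalently, if $G$ is the halfspace $E_f^+$ of an antipodal $G'$, the vertices of $E_f^+$ incident to an edge of $E_f$). *)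

theory Defs
  imports Main
begin

text \<open>Sign vectors over a finite ground set E are encoded as subsets of E
  (the coordinates equal to +). A subgraph of the hypercube is given by its
  vertex set V; for isometric subgraphs the graph is the induced one.\<close>

definition hc_adj :: "'e set set \<Rightarrow> 'e set \<Rightarrow> 'e set \<Rightarrow> bool" where
  "hc_adj V u v \<longleftrightarrow> u \<in> V \<and> v \<in> V \<and> card (u - v \<union> (v - u)) = 1"

text \<open>A path (as list of vertices) from u to w in the induced graph on V;
  its length is the number of edges, length p - 1.\<close>
definition is_path :: "'e set set \<Rightarrow> 'e set list \<Rightarrow> 'e set \<Rightarrow> 'e set \<Rightarrow> bool" where
  "is_path V p u w \<longleftrightarrow> p \<noteq> [] \<and> hd p = u \<and> last p = w \<and> set p \<subseteq> V \<and>
     (\<forall>i. Suc i < length p \<longrightarrow> hc_adj V (p ! i) (p ! Suc i))"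

definition gdist :: "'e set set \<Rightarrow> 'e set \<Rightarrow> 'e set \<Rightarrow> nat" where
  "gdist V u w = (LEAST n. \<exists>p. is_path V p u w \<and> length p = Suc n)"

definition hamming :: "'e set \<Rightarrow> 'e set \<Rightarrow> nat" where
  "hamming u v = card (u - v \<union> (v - u))"

text \<open>Partial cube on ground set E: V is an isometric subgraph of the hypercube
  on E (graph distance = Hamming distance, in particular connected), and E is
  minimal, i.e. every coordinate is flipped by some edge (every Theta-class is
  nonempty).\<close>
definition partial_cube :: "'e set \<Rightarrow> 'e set set \<Rightarrow> bool" where
  "partial_cube E V \<longleftrightarrow> finite E \<and> V \<noteq> {} \<and> (\<forall>u\<in>V. u \<subseteq> E) \<and>
     (\<forall>u\<in>V. \<forall>w\<in>V. (\<exists>p. is_path V p u w) \<and> gdist V u w = hamming u w) \<and>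
     (\<forall>f\<in>E. \<exists>u\<in>V. \<exists>v\<in>V. hc_adj V u v \<and> u - v \<union> (v - u) = {f})"

definition antipodal_pc :: "'e set \<Rightarrow> 'e set set \<Rightarrow> bool" where
  "antipodal_pc E V \<longleftrightarrow> partial_cube E V \<and> (\<forall>u\<in>V. E - u \<in> V)"

text \<open>Affine partial cube: (up to relabeling) the halfspace E_f^+ of an antipodal
  partial cube G' on the ground set E plus a new coordinate f; here the new
  coordinate is None and the old ones are Some e. The halfspace is considered
  with the (then constant) coordinate f deleted.\<close>
definition affine_pc :: "'e set \<Rightarrow> 'e set set \<Rightarrow> bool" where
  "affine_pc E V \<longleftrightarrow> (\<exists>G'. antipodal_pc (insert None (Some ` E)) G' \<and>
      V = {Some -` u | u. u \<in> G' \<and> None \<in> u})"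

definition interval :: "'e set set \<Rightarrow> 'e set \<Rightarrow> 'e set \<Rightarrow> 'e set set" where
  "interval V u w = {x. \<exists>p. is_path V p u w \<and> length p = Suc (gdist V u w) \<and> x \<in> set p}"

definition antipodes :: "'e set \<Rightarrow> 'e set set \<Rightarrow> 'e set set" where
  "antipodes E V = {u \<in> V. E - u \<in> V \<and> interval V u (E - u) = V}"

text \<open>Contraction of the Theta-class E_e: delete coordinate e.\<close>
definition contract :: "'e \<Rightarrow> 'e set set \<Rightarrow> 'e set set" where
  "contract e V = (\<lambda>u. u - {e}) ` V"

end

theory Submission
  imports Defs
begin

definition sd :: "'a set \<Rightarrow> 'a set \<Rightarrow> 'a set" where
  "sd u v = u - v \<union> (v - u)"

lemma hamming_sd: "hamming u v = card (sd u v)"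
  by (simp add: hamming_def sd_def)

lemma hc_adj_sd: "hc_adj W u v \<longleftrightarrow> u \<in> W \<and> v \<in> W \<and> card (sd u v) = 1"
  by (simp add: hc_adj_def sd_def)

lemma is_path_single: "is_path W [a] u b \<longleftrightarrow> u = a \<and> b = a \<and> a \<in> W"
  by (auto simp: is_path_def)

lemma is_path_Cons2: "q \<noteq> [] \<Longrightarrow> is_path W (a # q) u b \<longleftrightarrow>
   u = a \<and> hc_adj W a (hd q) \<and> is_path W q (hd q) b"
proof -
  assume q: "q \<noteq> []"
  have hd: "hd q = q ! 0" using q by (simp add: hd_conv_nth)
  show ?thesis
  proof
    assume H: "is_path W (a # q) u b"
    have "hc_adj W a (hd q)" using H q hd unfolding is_path_def
      by (metis Suc_less_eq length_Cons length_greater_0_conv nth_Cons_0 nth_Cons_Suc)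
    moreover have "\<forall>i. Suc i < length q \<longrightarrow> hc_adj W (q ! i) (q ! Suc i)"
    proof (intro allI impI)
      fix i assume "Suc i < length q"
      then have "Suc (Suc i) < length (a # q)" by simp
      then have "hc_adj W ((a#q) ! Suc i) ((a#q) ! Suc (Suc i))" using H unfolding is_path_def by blast
      then show "hc_adj W (q ! i) (q ! Suc i)" by simp
    qed
    ultimately show "u = a \<and> hc_adj W a (hd q) \<and> is_path W q (hd q) b"
      using H q unfolding is_path_def by auto
  next
    assume H: "u = a \<and> hc_adj W a (hd q) \<and> is_path W q (hd q) b"
    have "\<forall>i. Suc i < length (a # q) \<longrightarrow> hc_adj W ((a # q) ! i) ((a # q) ! Suc i)"
    proof (intro allI impI)
      fix i assume i: "Suc i < length (a # q)"
      show "hc_adj W ((a # q) ! i) ((a # q) ! Suc i)"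
      proof (cases i)
        case 0 then show ?thesis using H hd by simp
      next
        case (Suc j) then show ?thesis using H i unfolding is_path_def by auto
      qed
    qed
    then show "is_path W (a # q) u b" using H q unfolding is_path_def hc_adj_def by auto
  qed
qed

lemma sd_finite_tri:
  assumes "finite (sd a m)"
  shows "card (sd a b) \<le> card (sd a m) + card (sd m b)"
proof (cases "finite (sd a b)")
  case True
  have "sd m b \<subseteq> sd a m \<union> sd a b" by (auto simp: sd_def)
  then have "finite (sd m b)" using True assms by (meson finite_UnI finite_subset)
  have "sd a b \<subseteq> sd a m \<union> sd m b" by (auto simp: sd_def)
  then have "card (sd a b) \<le> card (sd a m \<union> sd m b)"
    using \<open>finite (sd m b)\<close> assms by (intro card_mono) auto
  also have "\<dots> \<le> card (sd a m) + card (sd m b)" by (rule card_Un_le)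
  finally show ?thesis .
qed simp

lemma path_lower: "is_path W p a b \<Longrightarrow> hamming a b < length p"
proof (induction p arbitrary: a)
  case Nil then show ?case by (simp add: is_path_def)
next
  case (Cons x q)
  show ?case
  proof (cases "q = []")
    case True then show ?thesis using Cons.prems by (simp add: is_path_single hamming_def)
  next
    case False
    have H: "a = x \<and> hc_adj W x (hd q) \<and> is_path W q (hd q) b"
      using Cons.prems is_path_Cons2[OF False, of W x a b] by simp
    then have a: "a = x" and adj: "hc_adj W x (hd q)" and pq: "is_path W q (hd q) b" by simp_all
    have c1: "card (sd x (hd q)) = 1" using adj by (simp add: hc_adj_sd)
    then have "finite (sd x (hd q))" by (metis card.infinite zero_neq_one)
    then have "card (sd x b) \<le> card (sd x (hd q)) + card (sd (hd q) b)" by (rule sd_finite_tri)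
    moreover have "hamming (hd q) b < length q" using Cons.IH pq by blast
    ultimately show ?thesis using a c1 by (simp add: hamming_sd)
  qed
qed

lemma path_append: "is_path W p a m \<Longrightarrow> is_path W q m b \<Longrightarrow>
   is_path W (p @ tl q) a b \<and> length (p @ tl q) = length p + length q - 1"
proof (induction p arbitrary: a)
  case Nil then show ?case by (simp add: is_path_def)
next
  case (Cons x p')
  have qne: "q \<noteq> []" and hq: "hd q = m" using Cons.prems by (auto simp: is_path_def)
  then have qeq: "q = m # tl q" by (cases q) auto
  show ?case
  proof (cases "p' = []")
    case True
    then have "is_path W [x] a m" using Cons.prems(1) by simp
    then have "a = x" "m = x" by (simp_all add: is_path_single)
    then have "(x # p') @ tl q = q" using True qeq by simp
    then show ?thesis using Cons.prems(2) \<open>a = x\<close> \<open>m = x\<close> True by simp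
  next
    case False
    have H: "a = x \<and> hc_adj W x (hd p') \<and> is_path W p' (hd p') m"
      using Cons.prems(1) is_path_Cons2[OF False, of W x a m] by simp
    then have a: "a = x" and adj: "hc_adj W x (hd p')" and pq: "is_path W p' (hd p') m" by simp_all
    have IH: "is_path W (p' @ tl q) (hd p') b \<and> length (p' @ tl q) = length p' + length q - 1"
      using Cons.IH pq Cons.prems(2) by blast
    have ne: "p' @ tl q \<noteq> []" using False by simp
    have hd2: "hd (p' @ tl q) = hd p'" using False by simp
    have "is_path W (x # (p' @ tl q)) a b"
      using is_path_Cons2[OF ne, of W x a b] hd2 IH a adj by simp
    then show ?thesis using IH qne False by simp
  qed
qed


definition stepP :: "'a set set \<Rightarrow> bool" where
  "stepP W \<longleftrightarrow> (\<forall>x\<in>W. \<forall>y\<in>W. x \<noteq> y \<longrightarrow> (\<exists>z\<in>W. \<exists>c. sd x z = {c} \<and> c \<in> sd x y))"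

lemma stepPD: "stepP W \<Longrightarrow> x \<in> W \<Longrightarrow> y \<in> W \<Longrightarrow> x \<noteq> y \<Longrightarrow>
  \<exists>z\<in>W. \<exists>c. sd x z = {c} \<and> c \<in> sd x y"
  unfolding stepP_def by simp

lemma fin_sd: "finite E' \<Longrightarrow> x \<subseteq> E' \<Longrightarrow> y \<subseteq> E' \<Longrightarrow> finite (sd x y)"
proof -
  assume a: "finite E'" "x \<subseteq> E'" "y \<subseteq> E'"
  then have "sd x y \<subseteq> E'" unfolding sd_def by auto
  then show ?thesis using a(1) by (rule finite_subset)
qed

lemma sd_xor: "sd z y = sd (sd x z) (sd x y)"
  by (auto simp: sd_def)

lemma sd_self_inv: "z = sd x (sd x z)"
  by (auto simp: sd_def)

lemma sd_step_remove: "sd x z = {c} \<Longrightarrow> c \<in> sd x y \<Longrightarrow> sd z y = sd x y - {c}"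
  using sd_xor[of z y x] by (auto simp: sd_def)

lemma geo_path:
  assumes fin: "finite E'" and sub: "\<forall>u\<in>W. u \<subseteq> E'" and st: "stepP W"
  shows "x \<in> W \<Longrightarrow> y \<in> W \<Longrightarrow> \<exists>p. is_path W p x y \<and> length p = Suc (hamming x y)"
proof (induction "hamming x y" arbitrary: x rule: less_induct)
  case less
  show ?case
  proof (cases "x = y")
    case True
    then show ?thesis using less.prems by (intro exI[of _ "[x]"]) (simp add: is_path_single hamming_def)
  next
    case False
    obtain z c where z: "z \<in> W" "sd x z = {c}" "c \<in> sd x y"
      using stepPD[OF st less.prems False] by blast
    have fsd: "finite (sd x y)" using fin_sd[OF fin] sub less.prems by simp
    have szy: "sd z y = sd x y - {c}" using sd_step_remove[OF z(2) z(3)] .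
    have hz: "hamming z y = hamming x y - 1"
      using szy fsd z(3) unfolding hamming_sd by (simp add: card_Diff_singleton)
    have "card (sd x y) > 0" using fsd z(3) card_gt_0_iff by blast
    then have hpos: "hamming x y \<ge> 1" unfolding hamming_sd by simp
    have lt: "hamming z y < hamming x y" using hz hpos by simp
    obtain q where q: "is_path W q z y" "length q = Suc (hamming z y)"
      using less.hyps[OF lt z(1) less.prems(2)] by blast
    have qne: "q \<noteq> []" and hq: "hd q = z" using q by (auto simp: is_path_def)
    have adj: "hc_adj W x z" using z less.prems by (simp add: hc_adj_sd)
    have "is_path W (x # q) x y" using is_path_Cons2[OF qne] hq adj q by simp
    moreover have "length (x # q) = Suc (hamming x y)" using q hz hpos by simp
    ultimately show ?thesis by blast
  qed
qed

lemma gdist_eq: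
  assumes "is_path W p x y" "length p = Suc (hamming x y)"
  shows "gdist W x y = hamming x y"
  unfolding gdist_def
proof (rule Least_equality)
  show "\<exists>p. is_path W p x y \<and> length p = Suc (hamming x y)" using assms by blast
next
  fix n assume "\<exists>p. is_path W p x y \<and> length p = Suc n"
  then show "hamming x y \<le> n" using path_lower by fastforce
qed

lemma ham_split:
  assumes "finite E'" "u \<subseteq> E'" "x \<subseteq> E'"
  shows "hamming u x + hamming x (E' - u) = hamming u (E' - u)"
proof -
  have eq: "sd u x \<union> sd x (E' - u) = E'" using assms by (auto simp: sd_def)
  have dj: "sd u x \<inter> sd x (E' - u) = {}" using assms by (auto simp: sd_def)
  have e2: "sd u (E' - u) = E'" using assms by (auto simp: sd_def)
  have f1: "finite (sd u x)" "finite (sd x (E' - u))" using eq assms(1)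
    by (metis finite_Un)+
  show ?thesis unfolding hamming_sd e2 using card_Un_disjoint[OF f1 dj] eq by simp
qed

lemma antipodes_char:
  assumes fin: "finite E'" and sub: "\<forall>u\<in>W. u \<subseteq> E'" and st: "stepP W"
  shows "antipodes E' W = {u\<in>W. E' - u \<in> W}"
proof -
  have "interval W u (E' - u) = W" if u: "u \<in> W" "E' - u \<in> W" for u
  proof
    show "interval W u (E' - u) \<subseteq> W" unfolding interval_def is_path_def by auto
  next
    show "W \<subseteq> interval W u (E' - u)"
    proof
      fix x assume x: "x \<in> W"
      obtain p where p: "is_path W p u x" "length p = Suc (hamming u x)"
        using geo_path[OF fin sub st u(1) x] by blast
      obtain q where q: "is_path W q x (E' - u)" "length q = Suc (hamming x (E' - u))"
        using geo_path[OF fin sub st x u(2)] by blast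
      have pq: "is_path W (p @ tl q) u (E' - u)" "length (p @ tl q) = length p + length q - 1"
        using path_append[OF p(1) q(1)] by auto
      have hs: "hamming u x + hamming x (E' - u) = hamming u (E' - u)"
        using ham_split[OF fin] sub u x by blast
      have len: "length (p @ tl q) = Suc (hamming u (E' - u))" using pq(2) p(2) q(2) hs by simp
      have gd: "gdist W u (E' - u) = hamming u (E' - u)" using gdist_eq[OF pq(1) len] .
      have "x \<in> set p" using p(1) unfolding is_path_def by (metis last_in_set)
      then show "x \<in> interval W u (E' - u)" unfolding interval_def using pq(1) len gd by auto
    qed
  qed
  then show ?thesis unfolding antipodes_def by auto
qed


lemma stepG:
  assumes pc: "partial_cube F G"
  shows "stepP G"
  unfolding stepP_def
proof (intro ballI impI)
  fix x y assume x: "x \<in> G" and y: "y \<in> G" and xy: "x \<noteq> y"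
  have fin: "finite F" and sub: "\<forall>u\<in>G. u \<subseteq> F" using pc by (auto simp: partial_cube_def)
  obtain p0 where p0: "is_path G p0 x y" and gd: "gdist G x y = hamming x y"
    using pc x y unfolding partial_cube_def by blast
  have ex: "\<exists>n p. is_path G p x y \<and> length p = Suc n"
    using p0 by (metis Suc_pred is_path_def length_greater_0_conv)
  obtain p where p: "is_path G p x y" "length p = Suc (hamming x y)"
    using LeastI_ex[OF ex] gd unfolding gdist_def by auto
  have fsd: "finite (sd x y)" using fin_sd[OF fin] sub x y by simp
  have "sd x y \<noteq> {}" using xy by (auto simp: sd_def)
  then have hpos: "hamming x y \<ge> 1" using fsd by (simp add: hamming_sd Suc_leI card_gt_0_iff)
  have pne: "p \<noteq> []" and hp: "hd p = x" using p by (auto simp: is_path_def)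
  then have peq: "p = x # tl p" by (cases p) auto
  have qne: "tl p \<noteq> []" using p(2) hpos by (cases p) auto
  have adj: "hc_adj G x (hd (tl p))" and pq: "is_path G (tl p) (hd (tl p)) y"
    using is_path_Cons2[OF qne, of G x x y] p(1) peq by auto
  have "card (sd x (hd (tl p))) = 1" using adj by (simp add: hc_adj_sd)
  then obtain c where c: "sd x (hd (tl p)) = {c}" by (erule card_1_singletonE)
  have zG: "hd (tl p) \<in> G" using adj by (simp add: hc_adj_def)
  have "c \<in> sd x y"
  proof (rule ccontr)
    assume nc: "c \<notin> sd x y"
    have "sd (hd (tl p)) y = insert c (sd x y)" using sd_xor[of "hd (tl p)" y x] c nc
      by (auto simp: sd_def)
    then have "hamming (hd (tl p)) y = Suc (hamming x y)" using fsd nc by (simp add: hamming_sd)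
    moreover have "hamming (hd (tl p)) y < length (tl p)" using path_lower[OF pq] .
    ultimately show False using p(2) by simp
  qed
  then show "\<exists>z\<in>G. \<exists>c. sd x z = {c} \<and> c \<in> sd x y" using zG c by blast
qed

definition emb :: "'e set \<Rightarrow> 'e option set" where
  "emb x = insert None (Some ` x)"

lemma emb_inv: "None \<in> U \<Longrightarrow> U = emb (Some -` U)"
proof -
  assume n: "None \<in> U"
  have "y \<in> insert None (Some ` Some -` U)" if "y \<in> U" for y
    using that by (cases y) auto
  then show ?thesis unfolding emb_def using n by auto
qed

lemma vimage_emb: "Some -` emb x = x"
  unfolding emb_def by auto

lemma sd_emb: "sd (emb x) (emb y) = Some ` (sd x y)"
  unfolding emb_def sd_def by auto

lemma emb_sd_some: "sd (emb x) {Some d} = emb (sd x {d})"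
  unfolding emb_def sd_def by auto

lemma emb_inj: "emb x = emb y \<Longrightarrow> x = y"
  by (metis vimage_emb)

lemma affine_memV:
  assumes "V = {Some -` u | u. u \<in> G' \<and> None \<in> u}"
  shows "x \<in> V \<longleftrightarrow> emb x \<in> G'"
proof
  assume "x \<in> V"
  then obtain U where U: "x = Some -` U" "U \<in> G'" "None \<in> U" using assms by blast
  then show "emb x \<in> G'" using emb_inv[OF U(3)] by simp
next
  assume a: "emb x \<in> G'"
  have "None \<in> emb x" unfolding emb_def by simp
  then show "x \<in> V" using assms a vimage_emb[of x] by blast
qed


lemma stepV:
  assumes Vdef: "V = {Some -` u | u. u \<in> G' \<and> None \<in> u}" and st: "stepP G'"
  shows "stepP V"
  unfolding stepP_def
proof (intro ballI impI)
  fix x y assume x: "x \<in> V" and y: "y \<in> V" and xy: "x \<noteq> y"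
  have ex: "emb x \<in> G'" "emb y \<in> G'" using x y affine_memV[OF Vdef] by auto
  have "emb x \<noteq> emb y" using xy emb_inj by blast
  then obtain Z c where Z: "Z \<in> G'" "sd (emb x) Z = {c}" "c \<in> sd (emb x) (emb y)"
    using stepPD[OF st ex \<open>emb x \<noteq> emb y\<close>] by blast
  then have "c \<in> Some ` sd x y" using sd_emb by metis
  then obtain d where d: "c = Some d" "d \<in> sd x y" by blast
  have "Z = emb (sd x {d})" using sd_self_inv[of Z "emb x"] Z(2) d(1) emb_sd_some by metis
  then have zV: "sd x {d} \<in> V" using Z(1) affine_memV[OF Vdef] by simp
  have "sd x (sd x {d}) = {d}" by (auto simp: sd_def)
  then show "\<exists>z\<in>V. \<exists>c. sd x z = {c} \<and> c \<in> sd x y" using zV d(2) by blast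
qed

lemma sd_minus: "sd (x - {e}) (y - {e}) = sd x y - {e}"
  by (auto simp: sd_def)

lemma stepC_aux:
  assumes st: "stepP V" and fin: "finite E" and sub: "\<forall>u\<in>V. u \<subseteq> E"
  shows "x \<in> V \<Longrightarrow> y \<in> V \<Longrightarrow> x - {e} \<noteq> y - {e} \<Longrightarrow>
    \<exists>z\<in>V. \<exists>c. sd (x - {e}) (z - {e}) = {c} \<and> c \<in> sd (x - {e}) (y - {e})"
proof (induction "hamming x y" arbitrary: x rule: less_induct)
  case less
  then have xy: "x \<noteq> y" by blast
  obtain z c where z: "z \<in> V" "sd x z = {c}" "c \<in> sd x y"
    using stepPD[OF st less.prems(1,2) xy] by blast
  show ?case
  proof (cases "c = e")
    case False
    then have "sd (x - {e}) (z - {e}) = {c}" "c \<in> sd (x - {e}) (y - {e})"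
      using z by (auto simp: sd_minus)
    then show ?thesis using z(1) by blast
  next
    case True
    have fsd: "finite (sd x y)" using fin_sd[OF fin] sub less.prems by simp
    have szy: "sd z y = sd x y - {c}" using sd_step_remove[OF z(2) z(3)] .
    have lt: "hamming z y < hamming x y" unfolding hamming_sd szy using fsd z(3)
      by (rule card_Diff1_less)
    have zx: "z - {e} = x - {e}" using z(2) True sd_self_inv[of z x] by (auto simp: sd_def)
    have ne: "z - {e} \<noteq> y - {e}" using zx less.prems(3) by simp
    show ?thesis using less.hyps[OF lt z(1) less.prems(2) ne] unfolding zx .
  qed
qed

lemma stepC:
  assumes st: "stepP V" and fin: "finite E" and sub: "\<forall>u\<in>V. u \<subseteq> E"
  shows "stepP (contract e V)"
  unfolding stepP_def contract_def
proof (intro ballI impI)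
  fix x' y' assume x': "x' \<in> (\<lambda>u. u - {e}) ` V" and y': "y' \<in> (\<lambda>u. u - {e}) ` V" and ne: "x' \<noteq> y'"
  obtain x y where xy: "x \<in> V" "y \<in> V" "x' = x - {e}" "y' = y - {e}" using x' y' by blast
  then show "\<exists>z\<in>(\<lambda>u. u - {e}) ` V. \<exists>c. sd x' z = {c} \<and> c \<in> sd x' y'"
    using stepC_aux[OF st fin sub xy(1,2)] ne by blast
qed


theorem mainTheorem18:
  fixes E :: "'e set" and V :: "'e set set" and e :: 'e
  assumes "affine_pc E V" and "e \<in> E"
  shows "antipodes (E - {e}) (contract e V) = contract e (antipodes E V)"
proof -
  define F where "F = insert None (Some ` E)"
  obtain G' where ap: "antipodal_pc F G'" and Vdef: "V = {Some -` u | u. u \<in> G' \<and> None \<in> u}"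
    using assms(1) unfolding affine_pc_def F_def by blast
  have pc: "partial_cube F G'" and anti: "\<And>U. U \<in> G' \<Longrightarrow> F - U \<in> G'"
    using ap unfolding antipodal_pc_def by auto
  have finF: "finite F" and subG: "\<forall>u\<in>G'. u \<subseteq> F" using pc unfolding partial_cube_def by auto
  have finE: "finite E" using finF unfolding F_def by (simp add: finite_image_iff)
  have memV: "\<And>x. x \<in> V \<longleftrightarrow> emb x \<in> G'" using affine_memV[OF Vdef] .
  have subV: "\<forall>u\<in>V. u \<subseteq> E"
  proof
    fix u assume "u \<in> V"
    then have "emb u \<subseteq> F" using memV subG by blast
    then show "u \<subseteq> E" unfolding emb_def F_def by auto
  qed
  have stG: "stepP G'" using stepG[OF pc] .
  have stV: "stepP V" using stepV[OF Vdef stG] .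
  have stC: "stepP (contract e V)" using stepC[OF stV finE subV] .
  have subC: "\<forall>u\<in>contract e V. u \<subseteq> E - {e}" using subV unfolding contract_def by auto
  have A1: "antipodes E V = {u\<in>V. E - u \<in> V}" using antipodes_char[OF finE subV stV] .
  have A2: "antipodes (E - {e}) (contract e V) = {u\<in>contract e V. (E - {e}) - u \<in> contract e V}"
    using antipodes_char[OF _ subC stC] finE by simp
  show ?thesis unfolding A1 A2
  proof
    show "contract e {u \<in> V. E - u \<in> V} \<subseteq> {u \<in> contract e V. E - {e} - u \<in> contract e V}"
    proof
      fix u' assume "u' \<in> contract e {u \<in> V. E - u \<in> V}"
      then obtain u where u: "u \<in> V" "E - u \<in> V" "u' = u - {e}" unfolding contract_def by blast
      have "E - {e} - u' = (E - u) - {e}" using u(3) by auto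
      then show "u' \<in> {u \<in> contract e V. E - {e} - u \<in> contract e V}"
        using u unfolding contract_def by auto
    qed
  next
    show "{u \<in> contract e V. E - {e} - u \<in> contract e V} \<subseteq> contract e {u \<in> V. E - u \<in> V}"
    proof
      fix u' assume "u' \<in> {u \<in> contract e V. E - {e} - u \<in> contract e V}"
      then obtain u w where u: "u \<in> V" "u' = u - {e}" and w: "w \<in> V" "E - {e} - u' = w - {e}"
        unfolding contract_def by blast
      show "u' \<in> contract e {u \<in> V. E - u \<in> V}"
      proof (cases "E - u \<in> V")
        case True
        then show ?thesis using u unfolding contract_def by blast
      next
        case False
        have uE: "u \<subseteq> E" and wE: "w \<subseteq> E" using u w subV by auto
        have "w \<noteq> E - u" using False w by blast
        then have Ew: "E - w = sd u {e}" using w(2) u(2) uE wE assms(2)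
          unfolding sd_def by blast
        have g1: "emb u \<in> G'" using u memV by blast
        have "F - emb w = Some ` (E - w)" unfolding F_def emb_def by auto
        then have g2: "Some ` (sd u {e}) \<in> G'" using anti[of "emb w"] w memV Ew by auto
        have "emb u \<noteq> Some ` (sd u {e})" unfolding emb_def by auto
        then obtain Z c where Z: "Z \<in> G'" "sd (emb u) Z = {c}" "c \<in> sd (emb u) (Some ` (sd u {e}))"
          using stepPD[OF stG g1 g2 \<open>emb u \<noteq> Some ` (sd u {e})\<close>] by blast
        have "sd (emb u) (Some ` (sd u {e})) = {None, Some e}" unfolding emb_def sd_def by auto
        then have c: "c = None \<or> c = Some e" using Z(3) by auto
        have Zeq: "Z = sd (emb u) {c}" using sd_self_inv[of Z "emb u"] Z(2) by simp
        show ?thesis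
        proof (cases "c = None")
          case True
          then have "Z = Some ` u" using Zeq unfolding emb_def sd_def by auto
          then have "F - Some ` u \<in> G'" using anti Z(1) by blast
          moreover have "F - Some ` u = emb (E - u)" unfolding F_def emb_def using uE by auto
          ultimately have "E - u \<in> V" using memV by simp
          then show ?thesis using False by blast
        next
          case False
          then have "c = Some e" using c by blast
          then have "Z = emb (sd u {e})" using Zeq emb_sd_some by metis
          then have xV: "sd u {e} \<in> V" using memV Z(1) by simp
          have "E - sd u {e} = w" using Ew wE by auto
          then have "sd u {e} \<in> {u \<in> V. E - u \<in> V}" using xV w(1) by simp
          moreover have "u' = sd u {e} - {e}" using u(2) unfolding sd_def by auto
          ultimately show ?thesis unfolding contract_def by blast
        qed
      qed
    qed
  qed
qed

end
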